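(* Let $(\mathcal{X},d_\mathcal{X})$ and $(\mathcal{Y},d_\mathcal{Y})$ be complete separable metric spaces and let $(\mathcal{H},\|\cdot\|_\mathcal{H})$ be a separable real Hilbert space with metric $d_\mathcal{H}(u,v):=\|u-v\|_\mathcal{H}$; equip these spaces with their Borel $\sigma$-algebras $\mathcal{B}_\mathcal{X}$, $\mathcal{B}_\mathcal{Y}$, $\mathcal{B}_\mathcal{H}$. Let $P$ be a probability measure on $(\mathcal{X}\times\mathcal{Y},\mathcal{B}_{\mathcal{X}\times\mathcal{Y}})$. Let $\psi:[0,\infty)\to[0,1]$ be a continuous, subadditive and monotone increasing function with $\psi(0)=0$ and $\psi(x)>0$ for all $x>0$, and for measurable $f_1,f_2:\mathcal{X}\to\mathcal{H}$ define $$d_\psi(f_1,f_2):=\int_{\mathcal{X}\times\mathcal{Y}} \psi\bigl(d_\mathcal{H}(f_1(x),f_2(x))\bigr)\,dP(x,y).$$ Let $C(\mathcal{X},\mathcal{H})$ be the set of all continuous functions $(\mathcal{X},d_\mathcal{X})\to(\mathcal{H},d_\mathcal{H})$, and let $\mathcal{L}_0(\mathcal{X},\mathcal{H})$ be the set of all $(\mathcal{B}_\mathcal{X},\mathcal{B}_\mathcal{H})$-measurable functions $\mathcal{X}\to\mathcal{H}$. Let $\mathcal{F}\subset\mathcal{L}_0(\mathcal{X},\mathcal{H})$ be such that either $\mathcal{F}$ is a dense subset of $C(\mathcal{X},\mathcal{H})$, or $\mathcal{F}$ contains a dense subset of $C(\mathcal{X},\mathcal{H})$, where denseness is with respect to $d_\psi$.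 Then $\mathcal{F}$ is dense in $\mathcal{L}_0(\mathcal{X},\mathcal{H})$ with respect to $d_\psi$: for every $\varepsilon>0$ and every $f\in\mathcal{L}_0(\mathcal{X},\mathcal{H})$ there exists $g_{\varepsilon,f}\in\mathcal{F}$ with $d_\psi(f,g_{\varepsilon,f})<\varepsilon$.
   Context: A subset $S$ is "dense in $T$ with respect to $d_\psi$" means: for every $t\in T$ and every $\varepsilon>0$ there is $s\in S$ with $d_\psi(t,s)<\varepsilon$. *)

theory Defs
  imports "HOL-Probability.Probability"
begin

definition d_psi :: "('x \<times> 'y) measure \<Rightarrow> (real \<Rightarrow> real) \<Rightarrow> ('x \<Rightarrow> 'h::metric_space) \<Rightarrow> ('x \<Rightarrow> 'h) \<Rightarrow> real" where
  "d_psi P \<psi> f1 f2 = (\<integral>z. \<psi> (dist (f1 (fst z)) (f2 (fst z))) \<partial>P)"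

definition dense_wrt :: "('a \<Rightarrow> 'a \<Rightarrow> real) \<Rightarrow> 'a set \<Rightarrow> 'a set \<Rightarrow> bool" where
  "dense_wrt d S T \<longleftrightarrow> (\<forall>t\<in>T. \<forall>\<epsilon>>0. \<exists>s\<in>S. d t s < \<epsilon>)"

end

theory Submission
  imports Defs
begin

lemma sep_fun:
  fixes C T :: "'x::metric_space set" and c :: "'h::real_normed_vector"
  assumes "closed C" "closed T" "C \<inter> T = {}"
  shows "\<exists>g. continuous_on UNIV g \<and> (\<forall>x\<in>C. g x = c) \<and> (\<forall>x\<in>T. g x = 0)"
proof (cases "C = {}")
  case True then show ?thesis by (intro exI[of _ "\<lambda>x. 0"]) auto
next
  case Cne: False
  show ?thesis
  proof (cases "T = {}")
    case True then show ?thesis by (intro exI[of _ "\<lambda>x. c"]) auto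
  next
    case Tne: False
    have pos: "setdist {x} T + setdist {x} C > 0" for x
    proof -
      have "setdist {x} T \<noteq> 0 \<or> setdist {x} C \<noteq> 0"
        using assms Cne Tne by (auto simp: setdist_eq_0_closed)
      then show ?thesis using setdist_pos_le[of "{x}" T] setdist_pos_le[of "{x}" C] by linarith
    qed
    define g where "g x = (setdist {x} T / (setdist {x} T + setdist {x} C)) *\<^sub>R c" for x
    have "continuous_on UNIV g"
      unfolding g_def using pos
      by (intro continuous_intros) (metis less_irrefl pos)
    moreover have "\<forall>x\<in>C. g x = c"
    proof
      fix x assume x: "x \<in> C"
      then have "setdist {x} C = 0" by (simp add: setdist_eq_0_closed assms)
      with pos[of x] show "g x = c" by (simp add: g_def)
    qed
    moreover have "\<forall>x\<in>T. g x = 0"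
      by (auto simp: g_def setdist_eq_0_closed assms)
    ultimately show ?thesis by blast
  qed
qed


locale ctx =
  fixes \<mu> :: "'x::polish_space measure" and \<psi> :: "real \<Rightarrow> real"
  assumes fin: "finite_measure \<mu>" and sets_mu: "sets \<mu> = sets borel"
    and psi_cont: "continuous_on {0..} \<psi>"
    and psi_range: "\<And>t. t \<ge> 0 \<Longrightarrow> \<psi> t \<in> {0..1}"
    and psi_subadd: "\<And>a b. a \<ge> 0 \<Longrightarrow> b \<ge> 0 \<Longrightarrow> \<psi> (a + b) \<le> \<psi> a + \<psi> b"
    and psi_mono: "mono_on {0..} \<psi>"
    and psi_0: "\<psi> 0 = 0"
begin

interpretation finite_measure \<mu> by (rule fin)

definition D :: "('x \<Rightarrow> 'h::{real_inner, polish_space}) \<Rightarrow> ('x \<Rightarrow> 'h) \<Rightarrow> real" where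
  "D f g = (\<integral>x. \<psi> (dist (f x) (g x)) \<partial>\<mu>)"

lemma space_mu: "space \<mu> = UNIV"
  using sets_eq_imp_space_eq[OF sets_mu] by simp

lemma meas_mu: "borel_measurable \<mu> = borel_measurable borel"
  by (rule measurable_cong_sets[OF sets_mu refl])

lemma psi'_cont: "continuous_on UNIV (\<lambda>t. \<psi> (max 0 t))"
  by (rule continuous_on_compose2[OF psi_cont]) (auto intro!: continuous_intros)

lemma psi_eq: "\<psi> (dist a b) = \<psi> (max 0 (dist a b))"
  by simp

lemma meas:
  assumes "f \<in> borel_measurable borel" "g \<in> borel_measurable borel"
  shows "(\<lambda>x. \<psi> (dist (f x) (g x :: 'h::{real_inner, polish_space}))) \<in> borel_measurable \<mu>"
proof -
  have "(\<lambda>x. dist (f x) (g x)) \<in> borel_measurable borel"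
    using assms by measurable
  then have "(\<lambda>x. \<psi> (max 0 (dist (f x) (g x)))) \<in> borel_measurable borel"
    using borel_measurable_continuous_onI[OF psi'_cont] measurable_compose by blast
  then show ?thesis by (simp add: meas_mu)
qed

lemma integ:
  assumes "f \<in> borel_measurable borel" "g \<in> borel_measurable borel"
  shows "integrable \<mu> (\<lambda>x. \<psi> (dist (f x) (g x :: 'h::{real_inner, polish_space})))"
  by (rule integrable_const_bound[where B=1]) (use psi_range meas[OF assms] in auto)

lemma D_tri:
  fixes f g h :: "'x \<Rightarrow> 'h::{real_inner, polish_space}"
  assumes "f \<in> borel_measurable borel" "g \<in> borel_measurable borel" "h \<in> borel_measurable borel"
  shows "D f h \<le> D f g + D g h"
proof -
  have "D f h \<le> (\<integral>x. \<psi> (dist (f x) (g x)) + \<psi> (dist (g x) (h x)) \<partial>\<mu>)"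
    unfolding D_def
  proof (rule integral_mono)
    fix x
    have "\<psi> (dist (f x) (h x)) \<le> \<psi> (dist (f x) (g x) + dist (g x) (h x))"
      by (rule mono_onD[OF psi_mono]) (auto intro: dist_triangle add_nonneg_nonneg)
    also have "\<dots> \<le> \<psi> (dist (f x) (g x)) + \<psi> (dist (g x) (h x))" by (rule psi_subadd) auto
    finally show "\<psi> (dist (f x) (h x)) \<le> \<psi> (dist (f x) (g x)) + \<psi> (dist (g x) (h x))" .
  qed (use integ assms in \<open>auto intro!: Bochner_Integration.integrable_add\<close>)
  also have "\<dots> = D f g + D g h" unfolding D_def
    by (rule Bochner_Integration.integral_add) (use integ assms in auto)
  finally show ?thesis .
qed

lemma D_add:
  fixes f1 f2 g1 g2 :: "'x \<Rightarrow> 'h::{real_inner, polish_space}"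
  assumes "f1 \<in> borel_measurable borel" "g1 \<in> borel_measurable borel"
    "f2 \<in> borel_measurable borel" "g2 \<in> borel_measurable borel"
  shows "D (\<lambda>x. f1 x + f2 x) (\<lambda>x. g1 x + g2 x) \<le> D f1 g1 + D f2 g2"
proof -
  have "D (\<lambda>x. f1 x + f2 x) (\<lambda>x. g1 x + g2 x) \<le> (\<integral>x. \<psi> (dist (f1 x) (g1 x)) + \<psi> (dist (f2 x) (g2 x)) \<partial>\<mu>)"
    unfolding D_def
  proof (rule integral_mono)
    fix x
    have "\<psi> (dist (f1 x + f2 x) (g1 x + g2 x)) \<le> \<psi> (dist (f1 x) (g1 x) + dist (f2 x) (g2 x))"
      by (rule mono_onD[OF psi_mono]) (auto intro: dist_triangle_add add_nonneg_nonneg)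
    also have "\<dots> \<le> \<psi> (dist (f1 x) (g1 x)) + \<psi> (dist (f2 x) (g2 x))" by (rule psi_subadd) auto
    finally show "\<psi> (dist (f1 x + f2 x) (g1 x + g2 x)) \<le> \<psi> (dist (f1 x) (g1 x)) + \<psi> (dist (f2 x) (g2 x))" .
  next
    show "integrable \<mu> (\<lambda>x. \<psi> (dist (f1 x + f2 x) (g1 x + g2 x)))"
      by (rule integ) (use assms in measurable)
  qed (use integ assms in \<open>auto intro!: Bochner_Integration.integrable_add\<close>)
  also have "\<dots> = D f1 g1 + D f2 g2" unfolding D_def
    by (rule Bochner_Integration.integral_add) (use integ assms in auto)
  finally show ?thesis .
qed

lemma D_set:
  fixes f g :: "'x \<Rightarrow> 'h::{real_inner, polish_space}"
  assumes "f \<in> borel_measurable borel" "g \<in> borel_measurable borel" "B \<in> sets borel"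
    "\<And>x. x \<notin> B \<Longrightarrow> f x = g x"
  shows "D f g \<le> measure \<mu> B"
proof -
  have "D f g \<le> (\<integral>x. indicator B x \<partial>\<mu>)"
    unfolding D_def
  proof (rule integral_mono)
    fix x show "\<psi> (dist (f x) (g x)) \<le> indicator B x"
      using assms(4)[of x] psi_range[of "dist (f x) (g x)"] psi_0 by (cases "x \<in> B") auto
  qed (use integ assms sets_mu in \<open>auto intro!: integrable_real_indicator simp: less_top[symmetric]\<close>)
  also have "\<dots> = measure \<mu> B" by (simp add: space_mu)
  finally show ?thesis .
qed


lemma D_lim:
  fixes f :: "nat \<Rightarrow> 'x \<Rightarrow> 'h::{real_inner, polish_space}"
  assumes m: "\<And>n. f n \<in> borel_measurable borel" "g \<in> borel_measurable borel"
    and lim: "\<And>x. (\<lambda>n. f n x) \<longlonglongrightarrow> g x"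
  shows "(\<lambda>n. D (f n) g) \<longlonglongrightarrow> 0"
proof -
  have "(\<lambda>n. \<integral>x. \<psi> (dist (f n x) (g x)) \<partial>\<mu>) \<longlonglongrightarrow> (\<integral>x. 0 \<partial>\<mu>)"
  proof (rule integral_dominated_convergence[where w="\<lambda>x. 1"])
    show "(\<lambda>x. 0::real) \<in> borel_measurable \<mu>" by simp
    show "\<And>i. (\<lambda>x. \<psi> (dist (f i x) (g x))) \<in> borel_measurable \<mu>" using meas m by blast
    show "integrable \<mu> (\<lambda>x. 1::real)" by simp
    show "AE x in \<mu>. (\<lambda>i. \<psi> (dist (f i x) (g x))) \<longlonglongrightarrow> 0"
    proof (rule AE_I2)
      fix x
      have "(\<lambda>i. dist (f i x) (g x)) \<longlonglongrightarrow> 0" using tendsto_dist_iff[THEN iffD1, OF lim[of x]] .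
      then have "(\<lambda>i. max 0 (dist (f i x) (g x))) \<longlonglongrightarrow> max 0 0" by (rule tendsto_max[OF tendsto_const])
      then have "(\<lambda>i. \<psi> (max 0 (dist (f i x) (g x)))) \<longlonglongrightarrow> \<psi> (max 0 0)"
        using psi'_cont by (intro continuous_on_tendsto_compose[OF psi'_cont]) auto
      then show "(\<lambda>i. \<psi> (dist (f i x) (g x))) \<longlonglongrightarrow> 0" by (simp add: psi_0)
    qed
    show "AE x in \<mu>. norm (\<psi> (dist (f i x) (g x))) \<le> 1" for i
    proof (rule AE_I2)
      fix x
      have "\<psi> (dist (f i x) (g x)) \<in> {0..1}" by (rule psi_range) simp
      then show "norm (\<psi> (dist (f i x) (g x))) \<le> 1" by simp
    qed
  qed
  then show ?thesis by (simp add: D_def)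
qed

definition L :: "('x \<Rightarrow> 'h::{real_inner, polish_space}) set" where
  "L = {f. f \<in> borel_measurable borel \<and> (\<forall>\<epsilon>>0. \<exists>g. continuous_on UNIV g \<and> D f g < \<epsilon>)}"

lemma D_self: "D f f = 0"
  by (simp add: D_def psi_0)

lemma L_cont: "continuous_on UNIV f \<Longrightarrow> f \<in> L"
proof -
  assume c: "continuous_on UNIV f"
  have "\<exists>g. continuous_on UNIV g \<and> D f g < e" if "e > 0" for e
    using c that D_self[of f] by (intro exI[of _ f]) simp
  then show "f \<in> L" unfolding L_def using borel_measurable_continuous_onI[OF c] by blast
qed

lemma L_approx: "f \<in> L \<Longrightarrow> e > 0 \<Longrightarrow> \<exists>g. continuous_on UNIV g \<and> D f g < e"
  by (simp add: L_def)

lemma L_meas: "f \<in> L \<Longrightarrow> f \<in> borel_measurable borel"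
  by (simp add: L_def)

lemma L_add:
  assumes "f1 \<in> L" "f2 \<in> L"
  shows "(\<lambda>x. f1 x + f2 x) \<in> L"
  unfolding L_def
proof (intro CollectI conjI allI impI)
  have m1: "f1 \<in> borel_measurable borel" "f2 \<in> borel_measurable borel" using assms by (auto simp: L_def)
  then show "(\<lambda>x. f1 x + f2 x) \<in> borel_measurable borel" by (rule borel_measurable_add)
  fix e :: real assume "e > 0"
  then have e2: "e/2 > 0" by simp
  obtain g1 where g1: "continuous_on UNIV g1" "D f1 g1 < e/2" using L_approx[OF assms(1) e2] by blast
  obtain g2 where g2: "continuous_on UNIV g2" "D f2 g2 < e/2" using L_approx[OF assms(2) e2] by blast
  note g = g1 g2
  have "D (\<lambda>x. f1 x + f2 x) (\<lambda>x. g1 x + g2 x) \<le> D f1 g1 + D f2 g2"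
    by (rule D_add) (use m1 g borel_measurable_continuous_onI in auto)
  with g show "\<exists>g. continuous_on UNIV g \<and> D (\<lambda>x. f1 x + f2 x) g < e"
    by (intro exI[of _ "\<lambda>x. g1 x + g2 x"]) (auto intro!: continuous_intros)
qed

lemma L_sum:
  fixes g :: "'i \<Rightarrow> 'x \<Rightarrow> 'h::{real_inner, polish_space}"
  shows "finite S \<Longrightarrow> (\<And>i. i \<in> S \<Longrightarrow> g i \<in> L) \<Longrightarrow> (\<lambda>x. \<Sum>i\<in>S. g i x) \<in> L"
proof (induction S rule: finite_induct)
  case empty then show ?case using L_cont[of "\<lambda>x. 0"] by simp
next
  case (insert a S)
  then show ?case using L_add[of "g a" "\<lambda>x. \<Sum>i\<in>S. g i x"] by simp
qed

lemma L_lim: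
  fixes f :: "nat \<Rightarrow> 'x \<Rightarrow> 'h::{real_inner, polish_space}"
  assumes "\<And>n. f n \<in> L" "g \<in> borel_measurable borel"
    and lim: "\<And>x. (\<lambda>n. f n x) \<longlonglongrightarrow> g x"
  shows "g \<in> L"
  unfolding L_def
proof (intro CollectI conjI allI impI)
  show "g \<in> borel_measurable borel" by fact
  fix e :: real assume e: "e > 0"
  have m: "\<And>n. f n \<in> borel_measurable borel" using assms(1) L_meas by blast
  have e2: "e/2 > 0" using e by simp
  have "eventually (\<lambda>n. D (f n) g < e/2) sequentially"
    by (rule order_tendstoD(2)[OF D_lim[OF m assms(2) lim] e2])
  then obtain n where n: "D (f n) g < e/2" by (auto simp: eventually_sequentially)
  obtain h where h: "continuous_on UNIV h" "D (f n) h < e/2"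
    using L_approx[OF assms(1) e2] by blast
  have hm: "h \<in> borel_measurable borel" using h borel_measurable_continuous_onI by blast
  have "D g h \<le> D g (f n) + D (f n) h" by (rule D_tri) (use m assms hm in auto)
  moreover have "D g (f n) = D (f n) g" by (simp add: D_def dist_commute)
  ultimately show "\<exists>h. continuous_on UNIV h \<and> D g h < e" using h n by (intro exI[of _ h]) auto
qed


lemma outer_approx:
  assumes B: "B \<in> sets borel" and d: "d > 0"
  shows "\<exists>U. B \<subseteq> U \<and> open U \<and> measure \<mu> U < measure \<mu> B + d"
proof -
  have fin': "emeasure \<mu> (space \<mu>) \<noteq> \<infinity>" by simp
  have eq: "emeasure \<mu> B = (INF U\<in>{U. B \<subseteq> U \<and> open U}. emeasure \<mu> U)"
    by (rule outer_regular[OF sets_mu fin' B])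
  have "emeasure \<mu> B < ennreal (measure \<mu> B + d)"
    using d by (simp add: emeasure_eq_measure ennreal_less_iff)
  then have "(INF U\<in>{U. B \<subseteq> U \<and> open U}. emeasure \<mu> U) < ennreal (measure \<mu> B + d)"
    by (simp add: eq)
  then obtain U where U: "B \<subseteq> U" "open U" "emeasure \<mu> U < ennreal (measure \<mu> B + d)"
    by (auto simp: INF_less_iff)
  then have "ennreal (measure \<mu> U) < ennreal (measure \<mu> B + d)"
    by (simp add: emeasure_eq_measure)
  then have "measure \<mu> U < measure \<mu> B + d"
    using d by (subst (asm) ennreal_less_iff) auto
  with U show ?thesis by blast
qed

lemma L_ind:
  fixes c :: "'h::{real_inner, polish_space}"
  assumes A: "A \<in> sets borel"
  shows "(\<lambda>x. indicator A x *\<^sub>R c) \<in> L"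
  unfolding L_def
proof (intro CollectI conjI allI impI)
  have fm: "(\<lambda>x. indicator A x *\<^sub>R c) \<in> borel_measurable borel"
    by (rule borel_measurable_scaleR[OF borel_measurable_indicator[OF A] borel_measurable_const])
  then show "(\<lambda>x. indicator A x *\<^sub>R c) \<in> borel_measurable borel" .
  fix e :: real assume e: "e > 0"
  then have d: "e/3 > 0" by simp
  obtain U where U: "A \<subseteq> U" "open U" "measure \<mu> U < measure \<mu> A + e/3"
    using outer_approx[OF A d] by blast
  have cA: "- A \<in> sets borel" using A by auto
  obtain V where V: "- A \<subseteq> V" "open V" "measure \<mu> V < measure \<mu> (- A) + e/3"
    using outer_approx[OF cA d] by blast
  have AM: "A \<in> sets \<mu>" "U \<in> sets \<mu>" "V \<in> sets \<mu>" "- A \<in> sets \<mu>"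
    using A cA U V sets_mu by auto
  have m1: "measure \<mu> (U - A) < e/3"
    using finite_measure_Diff[of U A] AM U by simp
  have m2: "measure \<mu> (V - (- A)) < e/3"
    using finite_measure_Diff[of V "- A"] AM V by simp
  obtain g where g: "continuous_on UNIV g" "\<forall>x\<in>- V. g x = c" "\<forall>x\<in>- U. g x = 0"
    using sep_fun[of "- V" "- U" c] U V by (auto simp: closed_def)
  define B where "B = (U - A) \<union> (V - (- A))"
  have BM: "B \<in> sets borel" using A U V by (auto simp: B_def)
  have "D (\<lambda>x. indicator A x *\<^sub>R c) g \<le> measure \<mu> B"
  proof (rule D_set[OF fm borel_measurable_continuous_onI[OF g(1)] BM])
    fix x assume "x \<notin> B"
    then show "indicator A x *\<^sub>R c = g x" using g U V by (cases "x \<in> A") (auto simp: B_def)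
  qed
  also have "\<dots> \<le> measure \<mu> (U - A) + measure \<mu> (V - (- A))"
    unfolding B_def by (rule measure_Un_le) (use AM in auto)
  also have "\<dots> < e" using m1 m2 e by linarith
  finally show "\<exists>g. continuous_on UNIV g \<and> D (\<lambda>x. indicator A x *\<^sub>R c) g < e"
    using g(1) by blast
qed

lemma L_simple:
  fixes s :: "'x \<Rightarrow> 'h::{real_inner, polish_space}"
  assumes s: "simple_function \<mu> s"
  shows "s \<in> L"
proof -
  have fin_r: "finite (s ` UNIV)" using s space_mu by (simp add: simple_function_def)
  have pre: "s -` {c} \<in> sets borel" for c
  proof -
    have "s -` {c} \<inter> space \<mu> \<in> sets \<mu>" using s by (rule simple_functionD)
    then show ?thesis using space_mu sets_mu by simp
  qed
  have eq: "s = (\<lambda>x. \<Sum>c\<in>s ` UNIV. indicator (s -` {c}) x *\<^sub>R c)"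
  proof
    fix x
    have "(\<Sum>c\<in>s ` UNIV. indicator (s -` {c}) x *\<^sub>R c) = (\<Sum>c\<in>s ` UNIV. if c = s x then c else 0)"
      by (rule sum.cong) (auto simp: indicator_def)
    also have "\<dots> = s x" using fin_r by (simp add: sum.delta')
    finally show "s x = (\<Sum>c\<in>s ` UNIV. indicator (s -` {c}) x *\<^sub>R c)" by simp
  qed
  have "(\<lambda>x. \<Sum>c\<in>s ` UNIV. indicator (s -` {c}) x *\<^sub>R c) \<in> L"
    by (rule L_sum[OF fin_r]) (rule L_ind[OF pre])
  then show ?thesis using eq by simp
qed

lemma L_all:
  fixes f :: "'x \<Rightarrow> 'h::{real_inner, polish_space}"
  assumes f: "f \<in> borel_measurable borel"
  shows "f \<in> L"
proof -
  have "f \<in> borel_measurable \<mu>" using f by (simp add: measurable_cong_sets[OF sets_mu refl])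
  from borel_measurable_implies_sequence_metric[OF this, of 0] obtain F where
    F: "\<And>i. simple_function \<mu> (F i)" "\<And>x. (\<lambda>i. F i x) \<longlonglongrightarrow> f x"
    using space_mu by auto
  show ?thesis by (rule L_lim[OF L_simple[OF F(1)] f F(2)])
qed

end

theorem theorem7:
  fixes P :: "('x::polish_space \<times> 'y::polish_space) measure"
    and \<psi> :: "real \<Rightarrow> real"
    and F :: "('x \<Rightarrow> 'h::{real_inner, polish_space}) set"
  assumes P_prob: "prob_space P"
    and P_sets: "sets P = sets borel"
    and psi_cont: "continuous_on {0..} \<psi>"
    and psi_range: "\<And>t. t \<ge> 0 \<Longrightarrow> \<psi> t \<in> {0..1}"
    and psi_subadd: "\<And>a b. a \<ge> 0 \<Longrightarrow> b \<ge> 0 \<Longrightarrow> \<psi> (a + b) \<le> \<psi> a + \<psi> b"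
    and psi_mono: "mono_on {0..} \<psi>"
    and psi_0: "\<psi> 0 = 0"
    and psi_pos: "\<And>t. t > 0 \<Longrightarrow> \<psi> t > 0"
    and F_L0: "F \<subseteq> borel_measurable borel"
    and F_dense: "(F \<subseteq> {f. continuous_on UNIV f} \<and> dense_wrt (d_psi P \<psi>) F {f. continuous_on UNIV f})
        \<or> (\<exists>D\<subseteq>F. D \<subseteq> {f. continuous_on UNIV f} \<and> dense_wrt (d_psi P \<psi>) D {f. continuous_on UNIV f})"
  shows "\<forall>\<epsilon>>0. \<forall>f\<in>borel_measurable borel. \<exists>g\<in>F. d_psi P \<psi> f g < \<epsilon>"
proof -
  interpret P: prob_space P by (rule P_prob)
  have fstm: "fst \<in> measurable P borel"
    using borel_measurable_continuous_onI[OF continuous_on_fst[OF continuous_on_id]]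
    by (simp add: measurable_cong_sets[OF P_sets refl])
  define \<mu> where "\<mu> = distr P borel fst"
  have fm: "finite_measure \<mu>" unfolding \<mu>_def by (rule P.finite_measure_distr[OF fstm])
  have sm: "sets \<mu> = sets borel" by (simp add: \<mu>_def)
  interpret C: ctx \<mu> \<psi>
    by (rule ctx.intro[OF fm sm psi_cont psi_range psi_subadd psi_mono psi_0])
  have deq: "d_psi P \<psi> f g = C.D f g"
    if "f \<in> borel_measurable borel" "g \<in> borel_measurable borel" for f g :: "'x \<Rightarrow> 'h"
  proof -
    have m: "(\<lambda>x. \<psi> (dist (f x) (g x))) \<in> borel_measurable borel"
      using C.meas[OF that] by (simp add: measurable_cong_sets[OF C.sets_mu refl])
    show ?thesis
      unfolding d_psi_def C.D_def using integral_distr[OF fstm m] by (simp add: \<mu>_def)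
  qed
  obtain D where D: "D \<subseteq> F" "dense_wrt (d_psi P \<psi>) D {f. continuous_on UNIV f}"
  proof -
    show thesis using F_dense that by blast
  qed
  show ?thesis
  proof (intro allI impI ballI)
    fix e :: real and f :: "'x \<Rightarrow> 'h" assume e: "e > 0" and f: "f \<in> borel_measurable borel"
    then have e2: "e/2 > 0" by simp
    obtain h where h: "continuous_on UNIV h" "C.D f h < e/2"
      using C.L_approx[OF C.L_all[OF f] e2] by blast
    obtain s where s: "s \<in> D" "d_psi P \<psi> h s < e/2"
      using D(2) h(1) e2 unfolding dense_wrt_def by blast
    have hm: "h \<in> borel_measurable borel" using h(1) borel_measurable_continuous_onI by blast
    have sm: "s \<in> borel_measurable borel" using s(1) D(1) F_L0 by blast
    have "C.D f s \<le> C.D f h + C.D h s" by (rule C.D_tri[OF f hm sm])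
    then have "d_psi P \<psi> f s < e" using deq[OF f sm] deq[OF hm sm] h s by simp
    then show "\<exists>g\<in>F. d_psi P \<psi> f g < e" using s(1) D(1) by blast
  qed
qed

end
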